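(* Let $\gamma$ be a POS for which there is a constant $c>0$ such that for every cylinder set $A$ there exists a time box $\Lambda$ with $A\in\mathcal F_{S\setminus\Lambda_+}$ and $\gamma_\Lambda(A,\omega)\ge c\,\gamma_\Lambda(A,\xi)$ for all $\omega,\xi\in\Omega$. Then $|\mathcal G(\gamma)|\le1$.
   Context: $(S,\le)$ is a countable partially ordered set. For $x\in S$ write $x_-=\{y\in S:y<x\}$, $x_+=\{y\in S:y>x\}$. For $\Upsilon\subset S$: $\max(\Upsilon)=\{x\in\Upsilon: y\notin\Upsilon\text{ for all }y>x\}$, $\min(\Upsilon)=\{x\in\Upsilon: y\notin\Upsilon\text{ for all }y<x\}$, the past $\Upsilon_-=\{x\in S\setminus\Upsilon:\exists y\in\Upsilon,\ x<y\}$, the future $\Upsilon_+=\{x\in S\setminus\Upsilon:\exists y\in\Upsilon,\ x>y\}$, and the outer time $\Upsilon^*=\{x\in S: x\text{ is comparable with no }y\in\Upsilon\}$. Standing assumptions: for every $x\in S$, $\max(x_-)$ and $\min(x_+)$ are finite, every $y<x$ satisfies $y\le y_0<x$ for some $y_0\in\max(x_-)$, every $z>x$ satisfies $z\ge z_0>x$ for some $z_0\in\min(x_+)$; and $S$ has no minimal element. A finite set $\Lambda\subset S$ is a time box if $\Lambda_-\cap\Lambda_+=\emptyset$. $(E,\mathcal E)$ is a measurable space, $\Omega=E^S$ with product $\sigma$-algebra $\mathcal F$; $\mathcal F_\Upsilon$ is generated by coordinates in $\Upsilon$; a cylinder set is an element of $\mathcal F_\Delta$ for some finite $\Delta$. A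 proper oriented kernel on a time box $\Lambda$ is a map $\gamma_\Lambda:\mathcal F_{S\setminus\Lambda_+}\times\Omega\to[0,1]$ such that (a) $\gamma_\Lambda(\cdot,\omega)$ is a probability measure; (b) $\gamma_\Lambda(A,\cdot)$ is $\mathcal F_{\Lambda_-\cup\Lambda^*}$-measurable for $A\in\mathcal F_{S\setminus\Lambda_+}$; (c) $\gamma_\Lambda(A,\cdot)$ is $\mathcal F_{\Lambda_-}$-measurable for $A\in\mathcal F_\Lambda$; (d) $\gamma_\Lambda(B,\omega)=\mathbf 1_B(\omega)$ for $B\in\mathcal F_{\Lambda_-\cup\Lambda^*}$. Compositions $(\gamma_\Delta\gamma_\Lambda)(f\mid\omega)=\int\gamma_\Lambda(f\mid\sigma)\gamma_\Delta(d\sigma,\omega)$, $(\mu\gamma_\Lambda)(f)=\int\gamma_\Lambda(f\mid\sigma)\mu(d\sigma)$ with $\gamma_\Lambda(f\mid\omega)=\int f\,d\gamma_\Lambda(\cdot,\omega)$. A POS is a family $\gamma=(\gamma_\Lambda)$ of proper oriented kernels indexed by all time boxes with $\gamma_\Delta\gamma_\Lambda=\gamma_\Delta$ on $\mathcal F_{S\setminus\Lambda_+}$ whenever $\Lambda\subset\Delta$. $\mathcal G(\gamma)$ is the set of probability measures $\mu$ with $\mu\gamma_\Lambda=\mu$ on $\mathcal F_{S\setminus\Lambda_+}$ for all time boxes $\Lambda$. *)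

theory Defs
  imports "HOL-Probability.Probability"
begin

definition past_set :: "'s::order set \<Rightarrow> 's set" where
  "past_set U = {x. x \<notin> U \<and> (\<exists>y\<in>U. x < y)}"

definition future_set :: "'s::order set \<Rightarrow> 's set" where
  "future_set U = {x. x \<notin> U \<and> (\<exists>y\<in>U. y < x)}"

definition outer_set :: "'s::order set \<Rightarrow> 's set" where
  "outer_set U = {x. \<forall>y\<in>U. \<not> (x \<le> y \<or> y \<le> x)}"

definition max_set :: "'s::order set \<Rightarrow> 's set" where
  "max_set U = {x\<in>U. \<forall>y. x < y \<longrightarrow> y \<notin> U}"

definition min_set :: "'s::order set \<Rightarrow> 's set" where
  "min_set U = {x\<in>U. \<forall>y. y < x \<longrightarrow> y \<notin> U}"

text \<open>Standing assumptions on the countable poset S (here the whole type 's).\<close>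
definition standing_assumptions :: "'s::order itself \<Rightarrow> bool" where
  "standing_assumptions _ \<longleftrightarrow>
     countable (UNIV :: 's set) \<and>
     (\<forall>x::'s. finite (max_set {y. y < x}) \<and> finite (min_set {z. x < z}) \<and>
        (\<forall>y. y < x \<longrightarrow> (\<exists>y0\<in>max_set {y. y < x}. y \<le> y0)) \<and>
        (\<forall>z. x < z \<longrightarrow> (\<exists>z0\<in>min_set {z. x < z}. z0 \<le> z))) \<and>
     (\<forall>x::'s. \<exists>y. y < x)"

definition time_box :: "'s::order set \<Rightarrow> bool" where
  "time_box L \<longleftrightarrow> finite L \<and> past_set L \<inter> future_set L = {}"

abbreviation cfg :: "'e measure \<Rightarrow> ('s \<Rightarrow> 'e) measure" where
  "cfg M \<equiv> PiM UNIV (\<lambda>_. M)"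

abbreviation Omega :: "'e measure \<Rightarrow> ('s \<Rightarrow> 'e) set" where
  "Omega M \<equiv> space (cfg M)"

definition Fsig :: "'e measure \<Rightarrow> 's set \<Rightarrow> ('s \<Rightarrow> 'e) set set" where
  "Fsig M U = sigma_sets (Omega M)
     (\<Union>i\<in>U. {(\<lambda>\<omega>. \<omega> i) -` B \<inter> Omega M | B. B \<in> sets M})"

definition cylinder :: "'e measure \<Rightarrow> ('s \<Rightarrow> 'e) set \<Rightarrow> bool" where
  "cylinder M A \<longleftrightarrow> (\<exists>D. finite D \<and> A \<in> Fsig M D)"

text \<open>A kernel on L assigns to each configuration a probability measure on
  Omega with sigma-algebra F_{S - L_+}; gamma_L(A, w) = measure (k w) A.\<close>
definition proper_oriented_kernel ::
  "'e measure \<Rightarrow> 's::order set \<Rightarrow> (('s \<Rightarrow> 'e) \<Rightarrow> ('s \<Rightarrow> 'e) measure) \<Rightarrow> bool" where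
  "proper_oriented_kernel M L k \<longleftrightarrow>
     (\<forall>\<omega>\<in>Omega M. prob_space (k \<omega>) \<and> space (k \<omega>) = Omega M \<and>
                   sets (k \<omega>) = Fsig M (UNIV - future_set L)) \<and>
     (\<forall>A\<in>Fsig M (UNIV - future_set L).
        (\<lambda>\<omega>. measure (k \<omega>) A) \<in> borel_measurable
             (sigma (Omega M) (Fsig M (past_set L \<union> outer_set L)))) \<and>
     (\<forall>A\<in>Fsig M L.
        (\<lambda>\<omega>. measure (k \<omega>) A) \<in> borel_measurable (sigma (Omega M) (Fsig M (past_set L)))) \<and>
     (\<forall>B\<in>Fsig M (past_set L \<union> outer_set L). \<forall>\<omega>\<in>Omega M.
        measure (k \<omega>) B = indicator B \<omega>)"

text \<open>Consistency gamma_D gamma_L = gamma_D for L \<subseteq> D, required for the events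
  on which both sides are defined.\<close>
definition POS ::
  "'e measure \<Rightarrow> ('s::order set \<Rightarrow> ('s \<Rightarrow> 'e) \<Rightarrow> ('s \<Rightarrow> 'e) measure) \<Rightarrow> bool" where
  "POS M \<gamma> \<longleftrightarrow>
     (\<forall>L. time_box L \<longrightarrow> proper_oriented_kernel M L (\<gamma> L)) \<and>
     (\<forall>L D. time_box L \<longrightarrow> time_box D \<longrightarrow> L \<subseteq> D \<longrightarrow>
        (\<forall>A\<in>Fsig M (UNIV - future_set L) \<inter> Fsig M (UNIV - future_set D).
          \<forall>\<omega>\<in>Omega M.
            (\<lambda>\<sigma>. measure (\<gamma> L \<sigma>) A) \<in> borel_measurable (\<gamma> D \<omega>) \<longrightarrow>
            (\<integral>\<sigma>. measure (\<gamma> L \<sigma>) A \<partial>(\<gamma> D \<omega>)) = measure (\<gamma> D \<omega>) A))"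

definition Gibbs ::
  "'e measure \<Rightarrow> ('s::order set \<Rightarrow> ('s \<Rightarrow> 'e) \<Rightarrow> ('s \<Rightarrow> 'e) measure) \<Rightarrow> ('s \<Rightarrow> 'e) measure set" where
  "Gibbs M \<gamma> = {\<mu>. prob_space \<mu> \<and> sets \<mu> = sets (cfg M) \<and>
     (\<forall>L. time_box L \<longrightarrow> (\<forall>A\<in>Fsig M (UNIV - future_set L).
        (\<integral>\<sigma>. measure (\<gamma> L \<sigma>) A \<partial>\<mu>) = measure \<mu> A))}"

end

theory Submission
  imports Defs
begin

lemma Fsig_gen_sub:
  "(\<Union>i\<in>U. {(\<lambda>\<omega>. \<omega> i) -` B \<inter> Omega M | B. B \<in> sets M}) \<subseteq> sets (cfg M)"
proof (intro subsetI)
  fix x assume "x \<in> (\<Union>i\<in>U. {(\<lambda>\<omega>. \<omega> i) -` B \<inter> Omega M | B. B \<in> sets M})"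
  then obtain i B where x: "x = (\<lambda>\<omega>. \<omega> i) -` B \<inter> Omega M" "B \<in> sets M" by blast
  have "(\<lambda>\<omega>. \<omega> i) \<in> measurable (cfg M) M"
    by (rule measurable_component_singleton) simp
  then show "x \<in> sets (cfg M)" using x measurable_sets by blast
qed

lemma Fsig_sub: "Fsig M U \<subseteq> sets (cfg M)"
  unfolding Fsig_def by (rule sets.sigma_sets_subset[OF Fsig_gen_sub])

lemma Fsig_mono: "U \<subseteq> V \<Longrightarrow> Fsig M U \<subseteq> Fsig M V"
  unfolding Fsig_def by (rule sigma_sets_mono') blast

lemma Fsig_sa: "sigma_algebra (Omega M) (Fsig M U)"
  unfolding Fsig_def by (rule sigma_algebra_sigma_sets) auto

lemma cyl_sets: "cylinder M A \<Longrightarrow> A \<in> sets (cfg M)"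
  unfolding cylinder_def using Fsig_sub by blast

lemma Fsig_Un: "a \<in> Fsig M U \<Longrightarrow> b \<in> Fsig M U \<Longrightarrow> a \<union> b \<in> Fsig M U"
proof -
  interpret sigma_algebra "Omega M" "Fsig M U" by (rule Fsig_sa)
  show "a \<in> Fsig M U \<Longrightarrow> b \<in> Fsig M U \<Longrightarrow> a \<union> b \<in> Fsig M U" by blast
qed

lemma Fsig_Int: "a \<in> Fsig M U \<Longrightarrow> b \<in> Fsig M U \<Longrightarrow> a \<inter> b \<in> Fsig M U"
proof -
  interpret sigma_algebra "Omega M" "Fsig M U" by (rule Fsig_sa)
  show "a \<in> Fsig M U \<Longrightarrow> b \<in> Fsig M U \<Longrightarrow> a \<inter> b \<in> Fsig M U" by blast
qed

lemma Fsig_Compl: "a \<in> Fsig M U \<Longrightarrow> Omega M - a \<in> Fsig M U"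
proof -
  interpret sigma_algebra "Omega M" "Fsig M U" by (rule Fsig_sa)
  show "a \<in> Fsig M U \<Longrightarrow> Omega M - a \<in> Fsig M U" by blast
qed

lemma cyl_Un: assumes "cylinder M A" "cylinder M B" shows "cylinder M (A \<union> B)"
proof -
  obtain D1 D2 where "finite D1" "A \<in> Fsig M D1" "finite D2" "B \<in> Fsig M D2"
    using assms unfolding cylinder_def by blast
  then have "A \<in> Fsig M (D1 \<union> D2)" "B \<in> Fsig M (D1 \<union> D2)"
    using Fsig_mono[of D1 "D1 \<union> D2" M] Fsig_mono[of D2 "D1 \<union> D2" M] by auto
  then have "A \<union> B \<in> Fsig M (D1 \<union> D2)" by (rule Fsig_Un)
  then show ?thesis unfolding cylinder_def using \<open>finite D1\<close> \<open>finite D2\<close> by blast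
qed

lemma cyl_Int: assumes "cylinder M A" "cylinder M B" shows "cylinder M (A \<inter> B)"
proof -
  obtain D1 D2 where "finite D1" "A \<in> Fsig M D1" "finite D2" "B \<in> Fsig M D2"
    using assms unfolding cylinder_def by blast
  then have "A \<in> Fsig M (D1 \<union> D2)" "B \<in> Fsig M (D1 \<union> D2)"
    using Fsig_mono[of D1 "D1 \<union> D2" M] Fsig_mono[of D2 "D1 \<union> D2" M] by auto
  then have "A \<inter> B \<in> Fsig M (D1 \<union> D2)" by (rule Fsig_Int)
  then show ?thesis unfolding cylinder_def using \<open>finite D1\<close> \<open>finite D2\<close> by blast
qed

lemma cyl_Compl: assumes "cylinder M A" shows "cylinder M (Omega M - A)"
  using assms Fsig_Compl unfolding cylinder_def by blast

lemma cyl_empty: "cylinder M {}"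
  unfolding cylinder_def Fsig_def using sigma_sets.Empty by blast

lemma cyl_UN: fixes N :: nat shows "(\<And>i. i < N \<Longrightarrow> cylinder M (C i)) \<Longrightarrow> cylinder M (\<Union>i<N. C i)"
proof (induction N)
  case 0 then show ?case using cyl_empty by simp
next
  case (Suc N)
  have "(\<Union>i<Suc N. C i) = C N \<union> (\<Union>i<N. C i)" by (auto simp: lessThan_Suc)
  moreover have "cylinder M (\<Union>i<N. C i)" using Suc.IH Suc.prems by simp
  moreover have "cylinder M (C N)" using Suc.prems by simp
  ultimately show ?case using cyl_Un by metis
qed

lemma cyl_space: "cylinder M A \<Longrightarrow> A \<subseteq> Omega M"
  using cyl_sets sets.sets_into_space by blast

lemma cyl_generates: "sigma_sets (Omega M) {A. cylinder M A} = sets (cfg M)"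
proof
  show "sigma_sets (Omega M) {A. cylinder M A} \<subseteq> sets (cfg M)"
    by (rule sets.sigma_sets_subset) (auto intro: cyl_sets)
  have "sets (cfg M) = sigma_sets (Omega M) {{f\<in>Omega M. f i \<in> A} | i A. A \<in> sets M}"
    by (simp add: sets_PiM_single space_PiM)
  also have "\<dots> \<subseteq> sigma_sets (Omega M) {A. cylinder M A}"
  proof (rule sigma_sets_mono', safe)
    fix i A assume "A \<in> sets M"
    then have "(\<lambda>\<omega>. \<omega> i) -` A \<inter> Omega M \<in> Fsig M {i}"
      unfolding Fsig_def by (intro sigma_sets.Basic) blast
    moreover have "(\<lambda>\<omega>. \<omega> i) -` A \<inter> Omega M = {f\<in>Omega M. f i \<in> A}" by auto
    ultimately show "cylinder M {f\<in>Omega M. f i \<in> A}"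
      unfolding cylinder_def by (metis finite.emptyI finite_insert)
  qed
  finally show "sets (cfg M) \<subseteq> sigma_sets (Omega M) {A. cylinder M A}" .
qed

lemma approx_cyl:
  assumes fmu: "finite_measure mu" and fnu: "finite_measure nu"
    and smu: "sets mu = sets (cfg M)" and snu: "sets nu = sets (cfg M)"
    and A: "A \<in> sets (cfg M)"
  shows "\<forall>e>0. \<exists>C. cylinder M C \<and>
           measure mu ((A - C) \<union> (C - A)) + measure nu ((A - C) \<union> (C - A)) < e"
proof -
  interpret mu: finite_measure mu by fact
  interpret nu: finite_measure nu by fact
  define d where "d X = measure mu X + measure nu X" for X
  have d_mono: "d X \<le> d Y" if "X \<subseteq> Y" "Y \<in> sets (cfg M)" for X Y
    unfolding d_def using that mu.finite_measure_mono nu.finite_measure_mono smu snu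
    by (metis add_mono)
  have d_sub: "d (X \<union> Y) \<le> d X + d Y" if "X \<in> sets (cfg M)" "Y \<in> sets (cfg M)" for X Y
    using that measure_subadditive[of X mu Y] measure_subadditive[of X nu Y] smu snu
      mu.emeasure_finite nu.emeasure_finite
    unfolding d_def by simp
  have d_subfin: "d (\<Union>i<N. Y i) \<le> (\<Sum>i<N. d (Y i))" if "\<And>i. Y i \<in> sets (cfg M)" for Y and N :: nat
    using that measure_subadditive_finite[of "{..<N}" Y mu]
      measure_subadditive_finite[of "{..<N}" Y nu] smu snu mu.emeasure_finite nu.emeasure_finite
    unfolding d_def sum.distrib by (simp add: image_subset_iff add_mono)
  have Int_st: "Int_stable {A. cylinder M A}" unfolding Int_stable_def using cyl_Int by blast
  have cl: "{A. cylinder M A} \<subseteq> Pow (Omega M)" using cyl_space by blast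
  have Amem: "A \<in> sigma_sets (Omega M) {A. cylinder M A}" using A cyl_generates by blast
  from Int_st cl Amem show ?thesis
  proof (induct rule: sigma_sets_induct_disjoint)
    case (basic C)
    then show ?case by (intro allI impI exI[of _ C]) auto
  next
    case empty
    then show ?case using cyl_empty by (intro allI impI exI[of _ "{}"]) auto
  next
    case (compl A)
    show ?case
    proof (intro allI impI)
      fix e :: real assume "e > 0"
      then obtain C where C: "cylinder M C"
        "measure mu ((A - C) \<union> (C - A)) + measure nu ((A - C) \<union> (C - A)) < e"
        using compl by blast
      have "A \<subseteq> Omega M" using compl(1) cyl_generates sets.sets_into_space by blast
      moreover have "C \<subseteq> Omega M" using C cyl_space by blast
      ultimately have eq: "((Omega M - A) - (Omega M - C)) \<union> ((Omega M - C) - (Omega M - A))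
          = (A - C) \<union> (C - A)" by blast
      show "\<exists>C. cylinder M C \<and> measure mu ((Omega M - A - C) \<union> (C - (Omega M - A))) +
              measure nu ((Omega M - A - C) \<union> (C - (Omega M - A))) < e"
        using C cyl_Compl[OF C(1)] eq by (intro exI[of _ "Omega M - C"]) simp
    qed
  next
    case (union A)
    have As: "A i \<in> sets (cfg M)" for i using union(2) cyl_generates by blast
    show ?case
    proof (intro allI impI)
      fix e :: real assume e: "e > 0"
      let ?U = "\<Union>i. A i"
      define B where "B n = (\<Union>i<n. A i)" for n
      have Bs: "B n \<in> sets (cfg M)" for n unfolding B_def using As by auto
      have Us: "?U \<in> sets (cfg M)" using As by auto
      have incB: "incseq B" unfolding incseq_def B_def by (auto intro: less_le_trans)
      have UB: "(\<Union>n. B n) = ?U" unfolding B_def by auto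
      have BU: "B n \<subseteq> ?U" for n unfolding B_def by auto
      have l1: "(\<lambda>n. measure mu (B n)) \<longlonglongrightarrow> measure mu ?U"
        using mu.finite_Lim_measure_incseq[of B] incB Bs smu UB by auto
      have l2: "(\<lambda>n. measure nu (B n)) \<longlonglongrightarrow> measure nu ?U"
        using nu.finite_Lim_measure_incseq[of B] incB Bs snu UB by auto
      have "(\<lambda>n. d ?U - d (B n)) \<longlonglongrightarrow> d ?U - d ?U"
        unfolding d_def by (intro tendsto_intros l1 l2)
      moreover have "d ?U - d (B n) = d (?U - B n)" for n
        using mu.finite_measure_Diff[of ?U "B n"] nu.finite_measure_Diff[of ?U "B n"] Us Bs BU smu snu
        unfolding d_def by simp
      ultimately have "(\<lambda>n. d (?U - B n)) \<longlonglongrightarrow> 0" by simp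
      from LIMSEQ_D[OF this, of "e/2"] e obtain N where "\<forall>n\<ge>N. norm (d (?U - B n) - 0) < e/2"
        by auto
      then have N: "d (?U - B N) < e/2" by auto
      have "\<forall>i. \<exists>C. cylinder M C \<and> d ((A i - C) \<union> (C - A i)) < e / (2 * (real N + 1))"
      proof
        fix i
        have "e / (2 * (real N + 1)) > 0" using e by simp
        then show "\<exists>C. cylinder M C \<and> d ((A i - C) \<union> (C - A i)) < e / (2 * (real N + 1))"
          using union(3)[of i] unfolding d_def by blast
      qed
      from choice[OF this] obtain C where C: "\<And>i. cylinder M (C i)"
        "\<And>i. d ((A i - C i) \<union> (C i - A i)) < e / (2 * (real N + 1))" by blast
      define D where "D i = (A i - C i) \<union> (C i - A i)" for i
      have Cs: "C i \<in> sets (cfg M)" for i using C cyl_sets by blast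
      have Ds: "D i \<in> sets (cfg M)" for i unfolding D_def using As Cs by auto
      let ?C = "\<Union>i<N. C i"
      have cylC: "cylinder M ?C" using cyl_UN C by blast
      have sub: "(?U - ?C) \<union> (?C - ?U) \<subseteq> (?U - B N) \<union> (\<Union>i<N. D i)"
        unfolding B_def D_def by blast
      have "d ((?U - ?C) \<union> (?C - ?U)) \<le> d ((?U - B N) \<union> (\<Union>i<N. D i))"
        using sub Us Bs Ds by (intro d_mono) auto
      also have "\<dots> \<le> d (?U - B N) + d (\<Union>i<N. D i)"
        using Us Bs Ds by (intro d_sub) auto
      also have "\<dots> \<le> d (?U - B N) + (\<Sum>i<N. d (D i))"
        using d_subfin[of D N] Ds by simp
      also have "(\<Sum>i<N. d (D i)) \<le> (\<Sum>i<N. e / (2 * (real N + 1)))"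
        using C(2) unfolding D_def by (intro sum_mono less_imp_le) auto
      also have "\<dots> = real N * (e / (2 * (real N + 1)))" by simp
      also have "\<dots> \<le> e / 2" using e by (simp add: field_simps)
      finally have "d ((?U - ?C) \<union> (?C - ?U)) < e" using N by simp
      then show "\<exists>C. cylinder M C \<and> measure mu ((?U - C) \<union> (C - ?U)) +
              measure nu ((?U - C) \<union> (C - ?U)) < e"
        using cylC unfolding d_def by blast
    qed
  qed
qed

lemma ext_ineq:
  assumes fmu: "finite_measure mu" and fnu: "finite_measure nu"
    and smu: "sets mu = sets (cfg M)" and snu: "sets nu = sets (cfg M)"
    and c: "c \<ge> 0"
    and H: "\<And>C. cylinder M C \<Longrightarrow> c * measure nu C \<le> measure mu C"
    and A: "A \<in> sets (cfg M)"
  shows "c * measure nu A \<le> measure mu A"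
proof (rule field_le_epsilon)
  interpret mu: finite_measure mu by fact
  interpret nu: finite_measure nu by fact
  fix e :: real assume e: "e > 0"
  then have e': "e / (1 + c) > 0" using c by simp
  obtain C where C: "cylinder M C"
    "measure mu ((A - C) \<union> (C - A)) + measure nu ((A - C) \<union> (C - A)) < e / (1 + c)"
    using approx_cyl[OF fmu fnu smu snu A] e' by blast
  let ?D = "(A - C) \<union> (C - A)"
  have Cs: "C \<in> sets (cfg M)" using C cyl_sets by blast
  have Ds: "?D \<in> sets (cfg M)" using Cs A by auto
  have "measure mu C \<le> measure mu (A \<union> (C - A))"
    using Cs A smu by (intro mu.finite_measure_mono) auto
  also have "\<dots> \<le> measure mu A + measure mu (C - A)"
    using Cs A smu by (intro measure_subadditive mu.emeasure_finite) auto
  finally have 1: "measure mu C \<le> measure mu A + measure mu (C - A)" .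
  have "measure nu A \<le> measure nu (C \<union> (A - C))"
    using Cs A snu by (intro nu.finite_measure_mono) auto
  also have "\<dots> \<le> measure nu C + measure nu (A - C)"
    using Cs A snu by (intro measure_subadditive nu.emeasure_finite) auto
  finally have 2: "measure nu A \<le> measure nu C + measure nu (A - C)" .
  have 3: "measure mu (C - A) \<le> measure mu ?D" using Ds smu by (intro mu.finite_measure_mono) auto
  have 4: "measure nu (A - C) \<le> measure nu ?D" using Ds snu by (intro nu.finite_measure_mono) auto
  have 5: "(1 + c) * (measure mu ?D + measure nu ?D) < e"
    using C(2) c by (simp add: field_simps)
  have "c * measure nu A \<le> c * measure nu C + c * measure nu (A - C)"
    using 2 c by (metis distrib_left mult_left_mono)
  also have "\<dots> \<le> measure mu C + c * measure nu ?D"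
    using H[OF C(1)] 4 c by (meson add_mono mult_left_mono)
  also have "\<dots> \<le> measure mu A + (measure mu ?D + c * measure nu ?D)"
    using 1 3 by simp
  also have "measure mu ?D + c * measure nu ?D \<le> (1 + c) * (measure mu ?D + measure nu ?D)"
    using c by (simp add: algebra_simps)
  finally show "c * measure nu A \<le> measure mu A + e" using 5 by simp
qed

lemma nn_integral_mix:
  assumes s1: "sets N1 = sets M" and s2: "sets N2 = sets M"
    and eq: "\<And>A. A \<in> sets M \<Longrightarrow> emeasure M A = a * emeasure N1 A + b * emeasure N2 A"
    and f: "f \<in> borel_measurable M"
  shows "(\<integral>\<^sup>+x. f x \<partial>M) = a * (\<integral>\<^sup>+x. f x \<partial>N1) + b * (\<integral>\<^sup>+x. f x \<partial>N2)"
  using f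
proof (induct rule: borel_measurable_induct)
  case (cong f g)
  have sp1: "space N1 = space M" using s1 sets_eq_imp_space_eq by blast
  have sp2: "space N2 = space M" using s2 sets_eq_imp_space_eq by blast
  have "(\<integral>\<^sup>+x. f x \<partial>M) = (\<integral>\<^sup>+x. g x \<partial>M)" using cong(3) by (intro nn_integral_cong) auto
  moreover have "(\<integral>\<^sup>+x. f x \<partial>N1) = (\<integral>\<^sup>+x. g x \<partial>N1)" using cong(3) sp1 by (intro nn_integral_cong) auto
  moreover have "(\<integral>\<^sup>+x. f x \<partial>N2) = (\<integral>\<^sup>+x. g x \<partial>N2)" using cong(3) sp2 by (intro nn_integral_cong) auto
  ultimately show ?case using cong(4) by simp
next
  case (set A)
  then show ?case using s1 s2 eq by simp
next
  case (mult u c)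
  have m1: "u \<in> borel_measurable N1" using mult(2) measurable_cong_sets[OF s1 refl] by blast
  have m2: "u \<in> borel_measurable N2" using mult(2) measurable_cong_sets[OF s2 refl] by blast
  show ?case using mult nn_integral_cmult[OF m1] nn_integral_cmult[OF m2] nn_integral_cmult[OF mult(2)]
    by (simp add: algebra_simps)
next
  case (add u v)
  have m1: "u \<in> borel_measurable N1" "v \<in> borel_measurable N1"
    using add measurable_cong_sets[OF s1 refl] by blast+
  have m2: "u \<in> borel_measurable N2" "v \<in> borel_measurable N2"
    using add measurable_cong_sets[OF s2 refl] by blast+
  show ?case using add nn_integral_add[OF m1(2) m1(1)] nn_integral_add[OF m2(2) m2(1)]
      nn_integral_add[OF add(4) add(1)]
    by (simp add: algebra_simps)
next
  case (seq U)
  have m1: "U i \<in> borel_measurable N1" for i using seq(1) measurable_cong_sets[OF s1 refl] by blast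
  have m2: "U i \<in> borel_measurable N2" for i using seq(1) measurable_cong_sets[OF s2 refl] by blast
  have i1: "incseq (\<lambda>i. a * integral\<^sup>N N1 (U i))"
    using seq(4) unfolding incseq_def le_fun_def by (auto intro!: mult_left_mono nn_integral_mono)
  have i2: "incseq (\<lambda>i. b * integral\<^sup>N N2 (U i))"
    using seq(4) unfolding incseq_def le_fun_def by (auto intro!: mult_left_mono nn_integral_mono)
  have "(\<integral>\<^sup>+x. (SUP i. U i) x \<partial>M) = (SUP i. integral\<^sup>N M (U i))"
    unfolding SUP_apply using seq by (intro nn_integral_monotone_convergence_SUP) auto
  also have "\<dots> = (SUP i. a * integral\<^sup>N N1 (U i) + b * integral\<^sup>N N2 (U i))"
    using seq(3) by simp
  also have "\<dots> = (SUP i. a * integral\<^sup>N N1 (U i)) + (SUP i. b * integral\<^sup>N N2 (U i))"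
    using i1 i2 by (rule ennreal_SUP_add)
  also have "\<dots> = a * (SUP i. integral\<^sup>N N1 (U i)) + b * (SUP i. integral\<^sup>N N2 (U i))"
    by (simp add: SUP_mult_left_ennreal)
  also have "(SUP i. integral\<^sup>N N1 (U i)) = (\<integral>\<^sup>+x. (SUP i. U i) x \<partial>N1)"
    unfolding SUP_apply using seq m1 by (intro nn_integral_monotone_convergence_SUP[symmetric]) auto
  also have "(SUP i. integral\<^sup>N N2 (U i)) = (\<integral>\<^sup>+x. (SUP i. U i) x \<partial>N2)"
    unfolding SUP_apply using seq m2 by (intro nn_integral_monotone_convergence_SUP[symmetric]) auto
  finally show ?case .
qed

lemma kern_meas:
  assumes P: "POS M \<gamma>" and L: "time_box L" and A: "A \<in> Fsig M (UNIV - future_set L)"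
  shows "(\<lambda>\<sigma>. measure (\<gamma> L \<sigma>) A) \<in> borel_measurable (cfg M)"
proof -
  have k: "proper_oriented_kernel M L (\<gamma> L)" using P L unfolding POS_def by blast
  let ?F = "Fsig M (past_set L \<union> outer_set L)"
  have m: "(\<lambda>\<sigma>. measure (\<gamma> L \<sigma>) A) \<in> borel_measurable (sigma (Omega M) ?F)"
    using k A unfolding proper_oriented_kernel_def by blast
  have FP: "?F \<subseteq> Pow (Omega M)" using Fsig_sub sets.sets_into_space by blast
  have "measurable (sigma (Omega M) ?F) borel \<subseteq> measurable (cfg M) borel"
  proof (rule measurable_mono)
    show "sets (sigma (Omega M) ?F) \<subseteq> sets (cfg M)"
      using FP sets_measure_of[OF FP] sets.sigma_sets_subset[OF Fsig_sub] by simp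
    show "space (sigma (Omega M) ?F) = space (cfg M)" by (simp add: space_measure_of_conv)
  qed auto
  then show ?thesis using m by blast
qed

lemma kern_bound:
  assumes P: "POS M \<gamma>" and L: "time_box L" and w: "\<omega> \<in> Omega M"
  shows "0 \<le> measure (\<gamma> L \<omega>) A \<and> measure (\<gamma> L \<omega>) A \<le> 1"
proof -
  have "prob_space (\<gamma> L \<omega>)" using P L w unfolding POS_def proper_oriented_kernel_def by blast
  then show ?thesis using prob_space.prob_le_1 by auto
qed

lemma kern_integrable:
  assumes P: "POS M \<gamma>" and L: "time_box L" and A: "A \<in> Fsig M (UNIV - future_set L)"
    and mu: "prob_space mu" "sets mu = sets (cfg M)"
  shows "integrable mu (\<lambda>\<sigma>. measure (\<gamma> L \<sigma>) A)"
proof -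
  interpret prob_space mu by fact
  have sp: "space mu = Omega M" using mu(2) sets_eq_imp_space_eq by blast
  have m: "(\<lambda>\<sigma>. measure (\<gamma> L \<sigma>) A) \<in> borel_measurable mu"
    using kern_meas[OF P L A] measurable_cong_sets[OF mu(2) refl] by blast
  show ?thesis
    by (rule integrable_const_bound[where B=1])
       (use kern_bound[OF P L] sp m in auto)
qed

lemma gibbs_cyl_ineq:
  assumes P: "POS M \<gamma>" and mu: "mu \<in> Gibbs M \<gamma>" and nu: "nu \<in> Gibbs M \<gamma>"
    and L: "time_box L" and A: "A \<in> Fsig M (UNIV - future_set L)"
    and H: "\<forall>\<omega>\<in>Omega M. \<forall>\<xi>\<in>Omega M. measure (\<gamma> L \<omega>) A \<ge> c * measure (\<gamma> L \<xi>) A"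
  shows "c * measure nu A \<le> measure mu A"
proof -
  have pmu: "prob_space mu" "sets mu = sets (cfg M)" using mu unfolding Gibbs_def by auto
  have pnu: "prob_space nu" "sets nu = sets (cfg M)" using nu unfolding Gibbs_def by auto
  have gmu: "(\<integral>\<sigma>. measure (\<gamma> L \<sigma>) A \<partial>mu) = measure mu A" using mu L A unfolding Gibbs_def by blast
  have gnu: "(\<integral>\<sigma>. measure (\<gamma> L \<sigma>) A \<partial>nu) = measure nu A" using nu L A unfolding Gibbs_def by blast
  have spmu: "space mu = Omega M" using pmu(2) sets_eq_imp_space_eq by blast
  have spnu: "space nu = Omega M" using pnu(2) sets_eq_imp_space_eq by blast
  have imu: "integrable mu (\<lambda>\<sigma>. measure (\<gamma> L \<sigma>) A)" by (rule kern_integrable[OF P L A pmu])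
  have inu: "integrable nu (\<lambda>\<sigma>. measure (\<gamma> L \<sigma>) A)" by (rule kern_integrable[OF P L A pnu])
  have step: "c * measure (\<gamma> L \<xi>) A \<le> measure mu A" if xi: "\<xi> \<in> Omega M" for \<xi>
  proof -
    have "c * measure (\<gamma> L \<xi>) A = (\<integral>\<sigma>. c * measure (\<gamma> L \<xi>) A \<partial>mu)"
      using prob_space.prob_space[OF pmu(1)] by simp
    also have "\<dots> \<le> (\<integral>\<sigma>. measure (\<gamma> L \<sigma>) A \<partial>mu)"
      using H xi spmu imu finite_measure.integrable_const[OF prob_space.finite_measure[OF pmu(1)]]
      by (intro integral_mono) auto
    finally show ?thesis using gmu by simp
  qed
  have "c * measure nu A = (\<integral>\<sigma>. c * measure (\<gamma> L \<sigma>) A \<partial>nu)" using gnu by simp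
  also have "\<dots> \<le> (\<integral>\<sigma>. measure mu A \<partial>nu)"
    using step spnu inu finite_measure.integrable_const[OF prob_space.finite_measure[OF pnu(1)]]
    by (intro integral_mono) auto
  also have "\<dots> = measure mu A" using prob_space.prob_space[OF pnu(1)] by simp
  finally show ?thesis .
qed

lemma mix_gibbs:
  fixes M :: "'e measure" and \<gamma> :: "'s::order set \<Rightarrow> ('s \<Rightarrow> 'e) \<Rightarrow> ('s \<Rightarrow> 'e) measure"
  assumes P: "POS M \<gamma>" and mu: "mu \<in> Gibbs M \<gamma>" and nu: "nu \<in> Gibbs M \<gamma>"
    and c: "0 < c" "c < 1"
    and ineq: "\<forall>A\<in>sets (cfg M::('s \<Rightarrow> 'e) measure). c * measure nu A \<le> measure mu A"
  shows "\<exists>mu'. mu' \<in> Gibbs M \<gamma> \<and>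
           (\<forall>A\<in>sets (cfg M::('s \<Rightarrow> 'e) measure). measure mu A = c * measure nu A + (1 - c) * measure mu' A)"
proof -
  have pmu: "prob_space mu" "sets mu = sets (cfg M::('s \<Rightarrow> 'e) measure)" using mu unfolding Gibbs_def by auto
  have pnu: "prob_space nu" "sets nu = sets (cfg M::('s \<Rightarrow> 'e) measure)" using nu unfolding Gibbs_def by auto
  interpret mu: prob_space mu by (rule pmu(1))
  interpret nu: prob_space nu by (rule pnu(1))
  have spmu: "space mu = space (cfg M::('s \<Rightarrow> 'e) measure)" using pmu(2) sets_eq_imp_space_eq by blast
  have spnu: "space nu = space (cfg M::('s \<Rightarrow> 'e) measure)" using pnu(2) sets_eq_imp_space_eq by blast
  define g where "g A = (measure mu A - c * measure nu A) / (1 - c)" for A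
  have g_nn: "g A \<ge> 0" if "A \<in> sets (cfg M::('s \<Rightarrow> 'e) measure)" for A
    using ineq that c unfolding g_def by simp
  define mu' where "mu' = measure_of (space (cfg M::('s \<Rightarrow> 'e) measure)) (sets (cfg M::('s \<Rightarrow> 'e) measure)) (\<lambda>A. ennreal (g A))"
  have ca: "countably_additive (sets (cfg M::('s \<Rightarrow> 'e) measure)) (\<lambda>A. ennreal (g A))"
    unfolding countably_additive_def
  proof (intro allI impI)
    fix A :: "nat \<Rightarrow> _" assume A: "range A \<subseteq> sets (cfg M::('s \<Rightarrow> 'e) measure)" "disjoint_family A"
      "\<Union> (range A) \<in> sets (cfg M::('s \<Rightarrow> 'e) measure)"
    have s1: "(\<lambda>i. measure mu (A i)) sums measure mu (\<Union>i. A i)"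
      using A pmu(2) by (intro measure_UNION mu.emeasure_finite) auto
    have s2: "(\<lambda>i. measure nu (A i)) sums measure nu (\<Union>i. A i)"
      using A pnu(2) by (intro measure_UNION nu.emeasure_finite) auto
    have s: "(\<lambda>i. g (A i)) sums g (\<Union>i. A i)"
      unfolding g_def by (intro sums_divide sums_diff sums_mult s1 s2)
    have "(\<Sum>i. ennreal (g (A i))) = ennreal (\<Sum>i. g (A i))"
      using s A(1) g_nn by (intro suminf_ennreal2) (auto simp: sums_summable)
    also have "(\<Sum>i. g (A i)) = g (\<Union>i. A i)" using s sums_unique by metis
    finally show "(\<Sum>i. ennreal (g (A i))) = ennreal (g (\<Union> (range A)))" by simp
  qed
  have pos: "positive (sets (cfg M::('s \<Rightarrow> 'e) measure)) (\<lambda>A. ennreal (g A))"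
    unfolding positive_def g_def by simp
  have em: "emeasure mu' A = ennreal (g A)" if "A \<in> sets (cfg M::('s \<Rightarrow> 'e) measure)" for A
    unfolding mu'_def by (rule emeasure_measure_of_sigma[OF sets.sigma_algebra_axioms pos ca that])
  have smu': "sets mu' = sets (cfg M::('s \<Rightarrow> 'e) measure)" unfolding mu'_def by (rule sets.sets_measure_of_eq)
  have spmu': "space mu' = space (cfg M::('s \<Rightarrow> 'e) measure)" unfolding mu'_def by (rule sets.space_measure_of_eq)
  have me: "measure mu' A = g A" if "A \<in> sets (cfg M::('s \<Rightarrow> 'e) measure)" for A
    using em[OF that] g_nn[OF that] by (simp add: measure_def)
  have g1: "g (space (cfg M::('s \<Rightarrow> 'e) measure)) = 1"
    using mu.prob_space nu.prob_space spmu spnu c unfolding g_def by simp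
  have pmu': "prob_space mu'"
    by (rule prob_spaceI) (simp add: spmu' em g1)
  have decomp: "measure mu A = c * measure nu A + (1 - c) * measure mu' A"
    if "A \<in> sets (cfg M::('s \<Rightarrow> 'e) measure)" for A
    using me[OF that] c unfolding g_def by simp
  have "mu' \<in> Gibbs M \<gamma>"
    unfolding Gibbs_def
  proof (intro CollectI conjI pmu' smu' allI impI ballI)
    fix L :: "'s set" and A assume L: "time_box L" and A: "A \<in> Fsig M (UNIV - future_set L)"
    let ?f = "\<lambda>\<sigma>. measure (\<gamma> L \<sigma>) A"
    have As: "A \<in> sets (cfg M::('s \<Rightarrow> 'e) measure)" using A Fsig_sub by blast
    have fm: "?f \<in> borel_measurable mu"
      using kern_meas[OF P L A] measurable_cong_sets[OF pmu(2) refl] by blast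
    have i1: "integrable mu ?f" by (rule kern_integrable[OF P L A pmu])
    have i2: "integrable nu ?f" by (rule kern_integrable[OF P L A pnu])
    have i3: "integrable mu' ?f" by (rule kern_integrable[OF P L A pmu' smu'])
    have nn: "\<And>N. space N = space (cfg M::('s \<Rightarrow> 'e) measure) \<Longrightarrow> AE x in N. 0 \<le> ?f x"
      using kern_bound[OF P L] by (auto intro!: AE_I2)
    have "(\<integral>\<^sup>+x. ennreal (?f x) \<partial>mu) =
        ennreal c * (\<integral>\<^sup>+x. ennreal (?f x) \<partial>nu) + ennreal (1 - c) * (\<integral>\<^sup>+x. ennreal (?f x) \<partial>mu')"
    proof (rule nn_integral_mix)
      show "sets nu = sets mu" "sets mu' = sets mu" using pmu pnu smu' by auto
      show "(\<lambda>x. ennreal (?f x)) \<in> borel_measurable mu" using fm by simp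
      fix B assume "B \<in> sets mu"
      then have B: "B \<in> sets (cfg M::('s \<Rightarrow> 'e) measure)" using pmu by simp
      have "emeasure mu B = ennreal (measure mu B)" by (simp add: mu.emeasure_eq_measure)
      also have "\<dots> = ennreal (c * measure nu B + (1 - c) * measure mu' B)"
        using decomp[OF B] by simp
      also have "\<dots> = ennreal (c * measure nu B) + ennreal ((1 - c) * measure mu' B)"
        by (rule ennreal_plus) (use c in auto)
      also have "\<dots> = ennreal c * ennreal (measure nu B) + ennreal (1 - c) * ennreal (measure mu' B)"
        using c by (simp add: ennreal_mult)
      also have "ennreal (measure nu B) = emeasure nu B" by (simp add: nu.emeasure_eq_measure)
      also have "ennreal (measure mu' B) = emeasure mu' B" using em[OF B] me[OF B] by simp
      finally show "emeasure mu B = ennreal c * emeasure nu B + ennreal (1 - c) * emeasure mu' B" .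
    qed
    then have "ennreal (\<integral>x. ?f x \<partial>mu) =
        ennreal c * ennreal (\<integral>x. ?f x \<partial>nu) + ennreal (1 - c) * ennreal (\<integral>x. ?f x \<partial>mu')"
      using nn_integral_eq_integral[OF i1 nn[OF spmu]] nn_integral_eq_integral[OF i2 nn[OF spnu]]
        nn_integral_eq_integral[OF i3 nn[OF spmu']] by simp
    also have "\<dots> = ennreal (c * (\<integral>x. ?f x \<partial>nu)) + ennreal ((1 - c) * (\<integral>x. ?f x \<partial>mu'))"
      using c integral_nonneg_AE[OF nn[OF spnu]] integral_nonneg_AE[OF nn[OF spmu']]
      by (simp add: ennreal_mult)
    also have "\<dots> = ennreal (c * (\<integral>x. ?f x \<partial>nu) + (1 - c) * (\<integral>x. ?f x \<partial>mu'))"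
      using c integral_nonneg_AE[OF nn[OF spnu]] integral_nonneg_AE[OF nn[OF spmu']]
      by (intro ennreal_plus[symmetric]) auto
    finally have "(\<integral>x. ?f x \<partial>mu) = c * (\<integral>x. ?f x \<partial>nu) + (1 - c) * (\<integral>x. ?f x \<partial>mu')"
      using c integral_nonneg_AE[OF nn[OF spnu]] integral_nonneg_AE[OF nn[OF spmu']]
        integral_nonneg_AE[OF nn[OF spmu]]
      by (subst (asm) ennreal_inj) auto
    moreover have "(\<integral>x. ?f x \<partial>mu) = measure mu A" using mu L A unfolding Gibbs_def by blast
    moreover have "(\<integral>x. ?f x \<partial>nu) = measure nu A" using nu L A unfolding Gibbs_def by blast
    ultimately have "(1 - c) * (\<integral>x. ?f x \<partial>mu') = (1 - c) * measure mu' A"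
      using decomp[OF As] by (metis add_left_cancel)
    then show "(\<integral>x. ?f x \<partial>mu') = measure mu' A" using c by simp
  qed
  then show ?thesis using decomp by blast
qed

theorem mainTheorem11:
  fixes M :: "'e measure"
    and \<gamma> :: "'s::order set \<Rightarrow> ('s \<Rightarrow> 'e) \<Rightarrow> ('s \<Rightarrow> 'e) measure"
  assumes "standing_assumptions TYPE('s)"
    and "POS M \<gamma>"
    and "\<exists>c>0. \<forall>A. cylinder M A \<longrightarrow>
           (\<exists>L. time_box L \<and> A \<in> Fsig M (UNIV - future_set L) \<and>
              (\<forall>\<omega>\<in>Omega M. \<forall>\<xi>\<in>Omega M. measure (\<gamma> L \<omega>) A \<ge> c * measure (\<gamma> L \<xi>) A))"
  shows "\<forall>\<mu>\<in>Gibbs M \<gamma>. \<forall>\<nu>\<in>Gibbs M \<gamma>. \<mu> = \<nu>"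
proof -
  from assms(3) obtain c0 where c0: "c0 > 0" and H0: "\<forall>A. cylinder M A \<longrightarrow>
           (\<exists>L. time_box L \<and> A \<in> Fsig M (UNIV - future_set L) \<and>
              (\<forall>\<omega>\<in>Omega M. \<forall>\<xi>\<in>Omega M. measure (\<gamma> L \<omega>) A \<ge> c0 * measure (\<gamma> L \<xi>) A))"
    by blast
  define c where "c = min c0 (1/2)"
  have c: "0 < c" "c < 1" "c \<le> c0" using c0 unfolding c_def by auto
  have H: "\<exists>L. time_box L \<and> A \<in> Fsig M (UNIV - future_set L) \<and>
              (\<forall>\<omega>\<in>Omega M. \<forall>\<xi>\<in>Omega M. measure (\<gamma> L \<omega>) A \<ge> c * measure (\<gamma> L \<xi>) A)"
    if cyl: "cylinder M A" for A
  proof -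
    obtain L where L: "time_box L" "A \<in> Fsig M (UNIV - future_set L)"
      "\<forall>\<omega>\<in>Omega M. \<forall>\<xi>\<in>Omega M. measure (\<gamma> L \<omega>) A \<ge> c0 * measure (\<gamma> L \<xi>) A"
      using H0 cyl by blast
    have "c * measure (\<gamma> L \<xi>) A \<le> c0 * measure (\<gamma> L \<xi>) A" for \<xi>
      using c(3) by (intro mult_right_mono) auto
    then show ?thesis using L by (meson order_trans)
  qed
  have ineq: "\<forall>A\<in>sets (cfg M::('s \<Rightarrow> 'e) measure). c * measure nu A \<le> measure mu A"
    if mu: "mu \<in> Gibbs M \<gamma>" and nu: "nu \<in> Gibbs M \<gamma>" for mu nu
  proof
    fix A :: "('s \<Rightarrow> 'e) set" assume A: "A \<in> sets (cfg M::('s \<Rightarrow> 'e) measure)"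
    have pmu: "prob_space mu" "sets mu = sets (cfg M)" using mu unfolding Gibbs_def by auto
    have pnu: "prob_space nu" "sets nu = sets (cfg M)" using nu unfolding Gibbs_def by auto
    show "c * measure nu A \<le> measure mu A"
    proof (rule ext_ineq[OF prob_space.finite_measure[OF pmu(1)] prob_space.finite_measure[OF pnu(1)]
          pmu(2) pnu(2) _ _ A])
      show "0 \<le> c" using c by simp
      fix C :: "('s \<Rightarrow> 'e) set" assume "cylinder M C"
      then obtain L where L: "time_box L" "C \<in> Fsig M (UNIV - future_set L)"
        "\<forall>\<omega>\<in>Omega M. \<forall>\<xi>\<in>Omega M. measure (\<gamma> L \<omega>) C \<ge> c * measure (\<gamma> L \<xi>) C"
        using H by blast
      show "c * measure nu C \<le> measure mu C"
        by (rule gibbs_cyl_ineq[OF assms(2) mu nu L])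
    qed
  qed
  have bound: "\<forall>mu\<in>Gibbs M \<gamma>. \<forall>nu\<in>Gibbs M \<gamma>. \<forall>A\<in>sets (cfg M::('s \<Rightarrow> 'e) measure).
      \<bar>measure mu A - measure nu A\<bar> \<le> (1 - c) ^ n" for n
  proof (induction n)
    case 0
    show ?case
    proof (intro ballI)
      fix mu nu A assume mu: "mu \<in> Gibbs M \<gamma>" and nu: "nu \<in> Gibbs M \<gamma>"
      have "prob_space mu" "prob_space nu" using mu nu unfolding Gibbs_def by auto
      then have "measure mu A \<le> 1" "measure nu A \<le> 1" using prob_space.prob_le_1 by auto
      then show "\<bar>measure mu A - measure nu A\<bar> \<le> (1 - c) ^ 0"
        unfolding power_0 abs_le_iff using measure_nonneg[of mu A] measure_nonneg[of nu A] by linarith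
    qed
  next
    case (Suc n)
    show ?case
    proof (intro ballI)
      fix mu nu A assume mu: "mu \<in> Gibbs M \<gamma>" and nu: "nu \<in> Gibbs M \<gamma>"
        and A: "A \<in> sets (cfg M::('s \<Rightarrow> 'e) measure)"
      obtain mu' where mu': "mu' \<in> Gibbs M \<gamma>"
        "\<forall>A\<in>sets (cfg M::('s \<Rightarrow> 'e) measure). measure mu A = c * measure nu A + (1 - c) * measure mu' A"
        using mix_gibbs[OF assms(2) mu nu c(1) c(2) ineq[OF mu nu]] by blast
      have "measure mu A - measure nu A = (1 - c) * (measure mu' A - measure nu A)"
        using mu'(2) A by (simp add: algebra_simps)
      then have "\<bar>measure mu A - measure nu A\<bar> = (1 - c) * \<bar>measure mu' A - measure nu A\<bar>"
        using c by (simp add: abs_mult)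
      also have "\<dots> \<le> (1 - c) * (1 - c) ^ n"
        using Suc.IH mu'(1) nu A c by (intro mult_left_mono) auto
      finally show "\<bar>measure mu A - measure nu A\<bar> \<le> (1 - c) ^ Suc n" by simp
    qed
  qed
  show ?thesis
  proof (intro ballI)
    fix mu nu assume mu: "mu \<in> Gibbs M \<gamma>" and nu: "nu \<in> Gibbs M \<gamma>"
    have pmu: "prob_space mu" "sets mu = sets (cfg M)" using mu unfolding Gibbs_def by auto
    have pnu: "prob_space nu" "sets nu = sets (cfg M)" using nu unfolding Gibbs_def by auto
    show "mu = nu"
    proof (rule measure_eqI)
      show "sets mu = sets nu" using pmu pnu by simp
      fix A assume A: "A \<in> sets mu"
      have lim: "(\<lambda>n. (1 - c) ^ n) \<longlonglongrightarrow> 0" using c by (intro LIMSEQ_power_zero) auto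
      have "\<bar>measure mu A - measure nu A\<bar> \<le> 0"
        by (rule LIMSEQ_le_const[OF lim]) (use bound mu nu A pmu in auto)
      then have "measure mu A = measure nu A" by simp
      then show "emeasure mu A = emeasure nu A"
        by (simp add: finite_measure.emeasure_eq_measure[OF prob_space.finite_measure[OF pmu(1)]]
          finite_measure.emeasure_eq_measure[OF prob_space.finite_measure[OF pnu(1)]])
    qed
  qed
qed

end
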